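(* Let $\Omega_n$ be a sequence of $\mathbb{C}$-proper convex open sets in $\mathbb{C}^d$ converging in the local Hausdorff topology to a $\mathbb{C}$-proper convex open set $\Omega$, and let $\varphi_n:\Delta\to\Omega_n$ be holomorphic maps. Then either (1) $\varphi_n(x)\to\infty$ for all $x\in\Delta$, or (2) some subsequence converges uniformly on compact subsets of $\Delta$ to a holomorphic map $\varphi:\Delta\to\overline{\Omega}$; moreover, in this case either $\varphi(\Delta)\subset\partial\Omega$ or $\varphi(\Delta)\subset\Omega$.
   Context: $\Delta$ is the unit disk. $\mathbb{C}$-proper: contains no complex affine line. Local Hausdorff topology: open convex $A_n\to A$ iff $d_H(\overline{A_n}\cap\overline{B_R(0)},\overline{A}\cap\overline{B_R(0)})\to0$ for all $R>0$. *)

theory Defs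
  imports "HOL-Analysis.Analysis"
begin

definition vec_holomorphic_on :: "(complex \<Rightarrow> complex ^ 'd) \<Rightarrow> complex set \<Rightarrow> bool" where
  "vec_holomorphic_on f S \<longleftrightarrow> (\<forall>i. (\<lambda>z. f z $ i) holomorphic_on S)"

definition C_proper :: "(complex ^ 'd) set \<Rightarrow> bool" where
  "C_proper A \<longleftrightarrow> \<not> (\<exists>a v. v \<noteq> 0 \<and> (\<forall>t::complex. a + t *s v \<in> A))"

definition hausdorff_dist :: "'a::metric_space set \<Rightarrow> 'a set \<Rightarrow> real" where
  "hausdorff_dist A B =
     (if A = {} \<and> B = {} then 0
      else max (SUP a\<in>A. infdist a B) (SUP b\<in>B. infdist b A))"

text \<open>The Hausdorff distance between an
  empty and a nonempty set is taken to be infinite, so convergence requires that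
  eventually the truncated closures are empty exactly when the limit truncation is.\<close>
definition local_hausdorff_conv :: "(nat \<Rightarrow> 'a::real_normed_vector set) \<Rightarrow> 'a set \<Rightarrow> bool" where
  "local_hausdorff_conv A L \<longleftrightarrow>
     (\<forall>R>0.
        (\<forall>\<^sub>F n in sequentially.
           (closure (A n) \<inter> cball 0 R = {}) \<longleftrightarrow> (closure L \<inter> cball 0 R = {})) \<and>
        ((\<lambda>n. hausdorff_dist (closure (A n) \<inter> cball 0 R) (closure L \<inter> cball 0 R))
           \<longlonglongrightarrow> 0))"

end

theory Submission
  imports Defs "HOL-Complex_Analysis.Complex_Analysis"
begin

definition lf :: "complex ^ 'd \<Rightarrow> complex ^ 'd \<Rightarrow> complex" where
  "lf a x = (\<Sum>i\<in>UNIV. cnj (a$i) * (x$i))"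

lemma lf_re: "Re (lf a x) = a \<bullet> x"
  by (simp add: lf_def inner_vec_def Re_sum inner_complex_def)

lemma lf_scale: "lf a (c *s x) = c * lf a x"
  by (simp add: lf_def sum_distrib_left algebra_simps)

lemma lf_scaleR: "lf a (r *\<^sub>R x) = of_real r * lf a x"
  unfolding lf_def sum_distrib_left
  by (rule sum.cong) (auto simp: scaleR_conv_of_real[where 'a=complex] mult_ac)

lemma lf_add: "lf a (x + y) = lf a x + lf a y"
  by (simp add: lf_def sum.distrib algebra_simps)

lemma lf_diff: "lf a (x - y) = lf a x - lf a y"
  by (simp add: lf_def sum_subtractf algebra_simps)

lemma lf_bound: "cmod (lf a x) \<le> CARD('d) * (norm a * norm (x::complex^'d))"
proof -
  have "cmod (lf a x) \<le> (\<Sum>i\<in>UNIV. cmod (cnj (a$i) * (x$i)))"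
    unfolding lf_def by (rule norm_sum)
  also have "\<dots> \<le> (\<Sum>i\<in>(UNIV::'d set). norm a * norm x)"
    by (intro sum_mono) (simp add: norm_mult, rule mult_mono, (metis Finite_Cartesian_Product.norm_nth_le)+, auto)
  finally show ?thesis by simp
qed

lemma lf_tendsto:
  assumes "(a \<longlongrightarrow> a0) F" "(x \<longlongrightarrow> x0) F"
  shows "((\<lambda>k. lf (a k) (x k)) \<longlongrightarrow> lf a0 x0) F"
  unfolding lf_def using assms by (intro tendsto_intros)

lemma lf_holo:
  assumes "vec_holomorphic_on f S"
  shows "(\<lambda>z. lf a (f z)) holomorphic_on S"
  using assms unfolding lf_def vec_holomorphic_on_def by (intro holomorphic_intros) auto

lemma vec_holo_cont:
  assumes "vec_holomorphic_on f S"
  shows "continuous_on S f"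
proof -
  have "continuous_on S (\<lambda>z. \<chi> i. f z $ i)"
    using assms unfolding vec_holomorphic_on_def
    by (intro continuous_on_vec_lambda holomorphic_on_imp_continuous_on) auto
  then show ?thesis by simp
qed

lemma norm_vec_le_sum: "norm (x::'a::real_normed_vector^'n) \<le> (\<Sum>i\<in>UNIV. norm (x$i))"
  by (simp add: norm_vec_def L2_set_le_sum)


lemma halfplane_bound:
  assumes x0: "norm x0 < 1" and K: "compact K" "K \<subseteq> ball 0 1"
  obtains Cb where "Cb \<ge> (0::real)" "\<And>f c z. f holomorphic_on ball 0 1 \<Longrightarrow> (\<And>w. w \<in> ball 0 1 \<Longrightarrow> Re (f w) < c)
     \<Longrightarrow> z \<in> K \<Longrightarrow> cmod (f z - f x0) \<le> Cb * (c - Re (f x0))"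
proof -
  obtain s where s: "0 \<le> s" "s < 1" "\<And>z. z\<in>K \<Longrightarrow> cmod (Moebius_function 0 x0 z) \<le> s"
  proof (cases "K = {}")
    case True then show ?thesis using that[of 0] by auto
  next
    case False
    have "continuous_on K (\<lambda>z. cmod (Moebius_function 0 x0 z))"
      using Moebius_function_holomorphic[OF x0, of 0] K(2)
      by (intro continuous_intros) (meson holomorphic_on_imp_continuous_on holomorphic_on_subset)
    then obtain z0 where z0: "z0 \<in> K" "\<forall>z\<in>K. cmod (Moebius_function 0 x0 z) \<le> cmod (Moebius_function 0 x0 z0)"
      using continuous_attains_sup[OF K(1) False] by blast
    show ?thesis
    proof (rule that[of "cmod (Moebius_function 0 x0 z0)"])
      show "cmod (Moebius_function 0 x0 z0) < 1"
        using Moebius_function_norm_lt_1[OF x0] z0 K(2) by auto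
    qed (use z0 in auto)
  qed
  define Cb where "Cb = 2 * s / (1 - s)"
  show thesis
  proof (rule that[of Cb])
    show "Cb \<ge> 0" using s by (simp add: Cb_def)
    fix f c z
    assume f: "f holomorphic_on ball 0 1" and hc: "\<And>w. w \<in> ball 0 1 \<Longrightarrow> Re (f w) < c" and z: "z \<in> K"
    define w0 where "w0 = f x0 - c"
    have rew0: "Re w0 < 0" using hc[of x0] x0 by (simp add: w0_def)
    define h where "h w = (w - w0)/(w + cnj w0)" for w
    define M where "M \<zeta> = Moebius_function 0 (-x0) \<zeta>" for \<zeta>
    have nx0: "norm (-x0) < 1" using x0 by simp
    have Mball: "norm (M \<zeta>) < 1" if "norm \<zeta> < 1" for \<zeta>
      unfolding M_def using Moebius_function_norm_lt_1[OF nx0 that] .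
    have hden: "w + cnj w0 \<noteq> 0" if "Re w < 0" for w
    proof
      assume "w + cnj w0 = 0"
      then have "Re (w + cnj w0) = 0" by simp
      then show False using that rew0 by simp
    qed
    have hlt0: "cmod (w - w0) < cmod (w + cnj w0)" if "Re w < 0" for w
    proof -
      have "(cmod (w - w0))^2 < (cmod (w + cnj w0))^2"
      proof -
        have e1: "(cmod (w - w0))^2 = (Re w - Re w0)^2 + (Im w - Im w0)^2" by (simp add: cmod_power2)
        have e2: "(cmod (w + cnj w0))^2 = (Re w + Re w0)^2 + (Im w - Im w0)^2" by (simp add: cmod_power2)
        have "0 < Re w * Re w0" using mult_neg_neg[OF that rew0] .
        then show ?thesis unfolding e1 e2 power2_diff power2_sum by linarith
      qed
      then show ?thesis by (rule power_less_imp_less_base) simp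
    qed
    have hlt: "cmod (h w) < 1" if "Re w < 0" for w
      using hlt0[OF that] hden[OF that] by (simp add: h_def norm_divide divide_less_eq)
    have fM: "(\<lambda>\<zeta>. f (M \<zeta>)) holomorphic_on ball 0 1"
    proof (rule holomorphic_on_compose_gen[of M "ball 0 1" f "ball 0 1", unfolded o_def])
      show "M holomorphic_on ball 0 1" unfolding M_def by (rule Moebius_function_holomorphic[OF nx0])
    qed (use f Mball in auto)
    have G: "(\<lambda>\<zeta>. h (f (M \<zeta>) - c)) holomorphic_on ball 0 1"
      unfolding h_def
    proof (intro holomorphic_intros fM)
      fix \<zeta> :: complex assume "\<zeta> \<in> ball 0 1"
      then have "Re (f (M \<zeta>) - c) < 0" using hc Mball by auto
      then show "f (M \<zeta>) - c + cnj w0 \<noteq> 0" by (rule hden)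
    qed
    have M0: "M 0 = x0" by (simp add: M_def Moebius_function_def)
    have G0: "h (f (M 0) - c) = 0" by (simp add: M0 h_def w0_def)
    have Glt: "cmod (h (f (M \<zeta>) - c)) < 1" if "cmod \<zeta> < 1" for \<zeta>
      using hlt hc Mball[OF that] by auto
    define \<zeta> where "\<zeta> = Moebius_function 0 x0 z"
    have z1: "norm z < 1" using z K(2) by auto
    have \<zeta>1: "norm \<zeta> < 1" unfolding \<zeta>_def using Moebius_function_norm_lt_1[OF x0 z1] .
    have d1: "1 - cnj x0 * z \<noteq> 0"
    proof
      assume "1 - cnj x0 * z = 0"
      then have "cnj x0 * z = 1" by simp
      then have "cmod (cnj x0 * z) = 1" by simp
      moreover have "cmod (cnj x0 * z) < 1 * 1" by (rule norm_mult_less) (use x0 z1 in auto)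
      ultimately show False by simp
    qed
    have d2: "1 - cnj x0 * x0 \<noteq> 0"
    proof
      assume "1 - cnj x0 * x0 = 0"
      then have "cnj x0 * x0 = 1" by simp
      then have "cmod (cnj x0 * x0) = 1" by simp
      moreover have "cmod (cnj x0 * x0) < 1 * 1" by (rule norm_mult_less) (use x0 in auto)
      ultimately show False by simp
    qed
    have fac: "1 + x0 * (z * (cnj x0 * cnj x0)) - (x0 * cnj x0 + z * cnj x0) = (1 - cnj x0 * z) * (1 - cnj x0 * x0)"
      by (simp add: algebra_simps)
    have hD: "1 + x0 * (z * (cnj x0 * cnj x0)) - (x0 * cnj x0 + z * cnj x0) \<noteq> 0"
      unfolding fac using d1 d2 by simp
    have Mz: "M \<zeta> = z"
      using d1 d2 hD by (simp add: M_def \<zeta>_def Moebius_function_def field_simps)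
    have "cmod (h (f (M \<zeta>) - c)) \<le> norm \<zeta>"
      using Schwarz_Lemma(1)[OF G _ Glt \<zeta>1] G0 by simp
    then have hz: "cmod (h (f z - c)) \<le> s" using s(3)[OF z] Mz by (simp add: \<zeta>_def)
    define w where "w = f z - c"
    have rw: "Re w < 0" using hc z K(2) by (auto simp: w_def)
    have "cmod (w - w0) \<le> s * cmod (w + cnj w0)"
      using hz hden[OF rw] by (simp add: h_def w_def norm_divide divide_le_eq)
    also have "\<dots> \<le> s * (cmod (w - w0) + cmod (w0 + cnj w0))"
      using s(1) by (intro mult_left_mono) (auto intro: order.trans[OF _ norm_triangle_ineq] simp: algebra_simps)
    also have "cmod (w0 + cnj w0) = 2 * (- Re w0)"
      using rew0 by (simp add: complex_add_cnj norm_mult)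
    finally have "(1 - s) * cmod (w - w0) \<le> 2 * s * (- Re w0)" by (simp add: algebra_simps)
    then have "cmod (w - w0) \<le> 2 * s * (- Re w0) / (1 - s)"
      using s(2) by (simp add: field_simps)
    then show "cmod (f z - f x0) \<le> Cb * (c - Re (f x0))"
      by (simp add: w_def w0_def Cb_def)
  qed
qed

lemma infdist_lessD:
  assumes "B \<noteq> {}" "infdist x B < e"
  shows "\<exists>w\<in>B. dist x w < e"
proof -
  have "bdd_below ((\<lambda>a. dist x a) ` B)" by (rule bdd_belowI[of _ 0]) auto
  then show ?thesis using assms by (simp add: infdist_notempty cINF_less_iff)
qed

lemma hd_ge_infdist:
  fixes A B :: "'a::real_normed_vector set"
  assumes "x \<in> A" "bounded A" "B \<noteq> {}"
  shows "infdist x B \<le> hausdorff_dist A B"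
proof -
  obtain b where b: "b \<in> B" using assms by auto
  obtain M where M: "\<forall>a\<in>A. norm a \<le> M" using assms(2) bounded_iff by blast
  have "bdd_above ((\<lambda>a. infdist a B) ` A)"
  proof (rule bdd_aboveI[of _ "M + norm b"])
    fix r assume "r \<in> (\<lambda>a. infdist a B) ` A"
    then obtain a where a: "a \<in> A" "r = infdist a B" by auto
    have "infdist a B \<le> dist a b" by (rule infdist_le[OF b])
    also have "\<dots> \<le> norm a + norm b" by (simp add: dist_norm norm_triangle_ineq4)
    finally show "r \<le> M + norm b" using M a by auto
  qed
  then have "infdist x B \<le> (SUP a\<in>A. infdist a B)" by (rule cSUP_upper[OF assms(1)])
  then show ?thesis using assms(1) by (auto simp: hausdorff_dist_def intro: max.coboundedI1)
qed

lemma lhc_approx: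
  assumes "local_hausdorff_conv A L" "R > 0" "e > 0"
  shows "\<forall>\<^sub>F n in sequentially. \<forall>x \<in> closure (A n) \<inter> cball 0 R. \<exists>w \<in> closure L \<inter> cball 0 R. dist x w < e"
proof -
  from assms(1,2) have ev1: "\<forall>\<^sub>F n in sequentially. (closure (A n) \<inter> cball 0 R = {}) \<longleftrightarrow> (closure L \<inter> cball 0 R = {})"
    and lim: "(\<lambda>n. hausdorff_dist (closure (A n) \<inter> cball 0 R) (closure L \<inter> cball 0 R)) \<longlonglongrightarrow> 0"
    by (auto simp: local_hausdorff_conv_def)
  have ev2: "\<forall>\<^sub>F n in sequentially. hausdorff_dist (closure (A n) \<inter> cball 0 R) (closure L \<inter> cball 0 R) < e"
    using order_tendstoD(2)[OF lim assms(3)] .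
  show ?thesis
  proof (rule eventually_mono[OF eventually_conj[OF ev1 ev2]], rule ballI)
    fix n x
    assume hh: "((closure (A n) \<inter> cball 0 R = {}) = (closure L \<inter> cball 0 R = {})) \<and>
       hausdorff_dist (closure (A n) \<inter> cball 0 R) (closure L \<inter> cball 0 R) < e"
      and xx: "x \<in> closure (A n) \<inter> cball 0 R"
    have h: "(closure (A n) \<inter> cball 0 R = {}) = (closure L \<inter> cball 0 R = {})"
      and hd: "hausdorff_dist (closure (A n) \<inter> cball 0 R) (closure L \<inter> cball 0 R) < e"
      using hh by auto
    have x: "x \<in> closure (A n)" "x \<in> cball 0 R" using xx by auto
    have ne: "closure L \<inter> cball 0 R \<noteq> {}" using h x by auto
    have "infdist x (closure L \<inter> cball 0 R) \<le> hausdorff_dist (closure (A n) \<inter> cball 0 R) (closure L \<inter> cball 0 R)"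
      by (rule hd_ge_infdist) (use x ne in auto)
    with hd have "infdist x (closure L \<inter> cball 0 R) < e" by simp
    then show "\<exists>w \<in> closure L \<inter> cball 0 R. dist x w < e" using infdist_lessD[OF ne] by blast
  qed
qed

lemma lhc_limit_in_closure:
  fixes A :: "nat \<Rightarrow> 'a::real_normed_vector set"
  assumes "local_hausdorff_conv A L" "filterlim m at_top sequentially"
    "\<forall>\<^sub>F k in sequentially. x k \<in> closure (A (m k))" "x \<longlonglongrightarrow> p"
  shows "p \<in> closure L"
proof -
  have "p \<in> closure (closure L)"
    unfolding closure_approachable
  proof (intro allI impI)
    fix e :: real assume e: "e > 0"
    define R where "R = norm p + 1"
    have R: "R > 0" using norm_ge_zero[of p] unfolding R_def by linarith
    have ev1: "\<forall>\<^sub>F k in sequentially. \<forall>y \<in> closure (A (m k)) \<inter> cball 0 R. \<exists>w \<in> closure L \<inter> cball 0 R. dist y w < e/2"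
      using eventually_compose_filterlim[OF lhc_approx[OF assms(1) R, of "e/2"] assms(2)] e by simp
    have ev2: "\<forall>\<^sub>F k in sequentially. dist (x k) p < min 1 (e/2)"
      by (rule tendstoD[OF assms(4)]) (use e in simp)
    obtain k where k: "\<forall>y \<in> closure (A (m k)) \<inter> cball 0 R. \<exists>w \<in> closure L \<inter> cball 0 R. dist y w < e/2"
      "dist (x k) p < min 1 (e/2)" "x k \<in> closure (A (m k))"
      using eventually_happens'[OF _ eventually_conj[OF ev1 eventually_conj[OF ev2 assms(3)]]] by auto
    have "norm (x k) \<le> R"
      using k(2) norm_triangle_ineq2[of "x k" p] by (simp add: R_def dist_norm)
    then have "x k \<in> closure (A (m k)) \<inter> cball 0 R" using k(3) by auto
    then obtain w where w: "w \<in> closure L" "dist (x k) w < e/2" using k(1) by blast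
    have "dist w p < e" using w(2) k(2) dist_triangle3[of w p "x k"] by (simp add: dist_commute)
    then show "\<exists>y\<in>closure L. dist y p < e" using w(1) by blast
  qed
  then show ?thesis by simp
qed

lemma lhc_away:
  fixes A :: "nat \<Rightarrow> 'a::real_normed_vector set"
  assumes "local_hausdorff_conv A L" "y \<notin> closure L"
  obtains \<epsilon> where "\<epsilon> > 0" "\<forall>\<^sub>F n in sequentially. \<forall>x\<in>closure (A n). dist x y \<ge> \<epsilon>"
proof -
  obtain \<delta> where \<delta>: "\<delta> > 0" "ball y \<delta> \<subseteq> - closure L"
    using open_contains_ball[of "- closure L"] assms(2) by auto
  define R where "R = norm y + \<delta>"
  have R: "R > 0" using \<delta> by (simp add: R_def add_nonneg_pos)
  show thesis
  proof (rule that[of "\<delta>/2"])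
    show "\<delta>/2 > 0" using \<delta> by simp
    show "\<forall>\<^sub>F n in sequentially. \<forall>x\<in>closure (A n). dist x y \<ge> \<delta>/2"
    proof (rule eventually_mono[OF lhc_approx[OF assms(1) R, of "\<delta>/2"]])
      show "\<delta>/2 > 0" using \<delta> by simp
      fix n assume h: "\<forall>x\<in>closure (A n) \<inter> cball 0 R. \<exists>w\<in>closure L \<inter> cball 0 R. dist x w < \<delta> / 2"
      show "\<forall>x\<in>closure (A n). dist x y \<ge> \<delta>/2"
      proof (rule ballI, rule ccontr)
        fix x assume x: "x \<in> closure (A n)" "\<not> \<delta>/2 \<le> dist x y"
        have "norm x \<le> R" using x(2) norm_triangle_ineq2[of x y] \<delta>(1) by (simp add: R_def dist_norm)
        then have "x \<in> closure (A n) \<inter> cball 0 R" using x(1) by auto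
        then obtain w where w: "w \<in> closure L" "dist x w < \<delta>/2" using h by blast
        have "dist y w < \<delta>" using w(2) x(2) dist_triangle[of y w x] by (simp add: dist_commute)
        then show False using \<delta>(2) w(1) by (auto simp: subset_eq)
      qed
    qed
  qed
qed


lemma line_in_closure:
  fixes \<Omega> :: "(complex^'d) set"
  assumes "open \<Omega>" "convex \<Omega>" "C_proper \<Omega>" "p \<in> closure \<Omega>" "u \<noteq> 0"
  shows "\<exists>\<zeta>. p + \<zeta> *s u \<notin> closure \<Omega>"
proof (rule ccontr)
  assume "\<not> ?thesis" then have line: "\<And>\<zeta>. p + \<zeta> *s u \<in> closure \<Omega>" by blast
  have "\<Omega> \<noteq> {}" using assms(4) by auto
  then obtain q where q: "q \<in> \<Omega>" by auto
  then obtain \<delta> where \<delta>: "\<delta> > 0" "ball q \<delta> \<subseteq> \<Omega>" using assms(1) open_contains_ball by blast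
  have "q + t *s u \<in> \<Omega>" for t
  proof -
    have sub: "ball (q + t *s u) \<delta> \<subseteq> closure \<Omega>"
    proof
      fix x assume x: "x \<in> ball (q + t *s u) \<delta>"
      define q' where "q' = x - t *s u"
      have "dist q q' = dist (q + t *s u) x" by (simp add: q'_def dist_norm algebra_simps)
      then have "q' \<in> ball q \<delta>" using x by simp
      then have q': "q' \<in> closure \<Omega>" using \<delta>(2) closure_subset by blast
      define l where "l n = inverse (real (Suc (Suc n)))" for n
      define y where "y n = (1 - l n) *\<^sub>R q' + l n *\<^sub>R (p + (of_real (real (Suc (Suc n))) * t) *s u)" for n
      have l01: "0 \<le> l n" "l n \<le> 1" for n by (auto simp: l_def inverse_le_1_iff)
      have yin: "y n \<in> closure \<Omega>" for n
        unfolding y_def by (rule convexD) (use l01 q' line assms(2) in auto)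
      have key: "(of_real (l n) :: complex) * (of_real (real (Suc (Suc n))) * t) = t" for n
      proof -
        have "l n * (real (Suc (Suc n))) = 1" by (simp add: l_def)
        then show ?thesis by (metis mult.assoc mult_1 of_real_1 of_real_mult)
      qed
      have comp: "(l n *\<^sub>R ((of_real (real (Suc (Suc n))) * t) *s u)) $ i = t * u $ i" for n i
      proof -
        have "(l n *\<^sub>R ((of_real (real (Suc (Suc n))) * t) *s u)) $ i = of_real (l n) * ((of_real (real (Suc (Suc n))) * t) * u $ i)"
          by (simp add: scaleR_conv_of_real[where 'a=complex])
        also have "\<dots> = (of_real (l n) * (of_real (real (Suc (Suc n))) * t)) * u $ i" by (simp only: mult.assoc)
        also have "\<dots> = t * u $ i" by (simp only: key)
        finally show ?thesis .
      qed
      have eqw: "l n *\<^sub>R ((of_real (real (Suc (Suc n))) * t) *s u) = t *s u" for n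
        unfolding vec_eq_iff by (metis comp vector_smult_component)
      have yeq: "y n = (1 - l n) *\<^sub>R q' + l n *\<^sub>R p + t *s u" for n
        by (simp only: y_def scaleR_add_right eqw add.assoc)
      have "l \<longlonglongrightarrow> 0"
        unfolding l_def by (rule LIMSEQ_Suc[OF LIMSEQ_inverse_real_of_nat])
      then have "y \<longlonglongrightarrow> (1 - 0) *\<^sub>R q' + 0 *\<^sub>R p + t *s u"
        unfolding yeq by (intro tendsto_intros)
      then have "y \<longlonglongrightarrow> x" by (simp add: q'_def)
      then show "x \<in> closure \<Omega>" using closed_sequentially[of "closure \<Omega>" y x] yin by blast
    qed
    have "q + t *s u \<in> interior (closure \<Omega>)"
      using sub \<delta>(1) by (meson centre_in_ball interior_maximal open_ball subsetD)
    then show ?thesis using convex_interior_closure[OF assms(2)] interior_open[OF assms(1)] by simp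
  qed
  then show False using assms(3,5) unfolding C_proper_def by blast
qed


lemma sep_ball:
  fixes S :: "(complex^'d) set"
  assumes "convex S" "\<epsilon> > 0" "\<forall>x\<in>S. dist x y \<ge> \<epsilon>"
  obtains a where "norm a = 1" "\<forall>x\<in>S. a \<bullet> x \<le> a \<bullet> y - \<epsilon>/2"
proof (cases "S = {}")
  case True
  have "(1::complex^'d) \<noteq> 0" by (simp add: vec_eq_iff)
  then have "norm (sgn (1::complex^'d)) = 1" by (simp add: norm_sgn)
  then show ?thesis using that True by blast
next
  case False
  have disj: "S \<inter> cball y (\<epsilon>/2) = {}"
    using assms(2,3) by (auto simp: dist_commute)
  obtain a b where ab: "a \<noteq> 0" "\<forall>x\<in>S. inner a x \<le> b" "\<forall>x\<in>cball y (\<epsilon>/2). inner a x \<ge> b"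
    using separating_hyperplane_sets[OF assms(1) convex_cball False _ disj] assms(2) by auto
  have na: "norm a > 0" using ab(1) by simp
  have "y - (\<epsilon>/2) *\<^sub>R sgn a \<in> cball y (\<epsilon>/2)"
    using assms(2) ab(1) by (simp add: dist_norm norm_sgn)
  then have "b \<le> a \<bullet> (y - (\<epsilon>/2) *\<^sub>R sgn a)" using ab(3) by blast
  also have "\<dots> = a \<bullet> y - (\<epsilon>/2) * norm a"
  proof -
    have "a \<bullet> sgn a = norm a"
      using na by (simp add: sgn_div_norm dot_square_norm power2_eq_square)
    then show ?thesis by (simp add: inner_diff_right)
  qed
  finally have b: "b \<le> a \<bullet> y - (\<epsilon>/2) * norm a" .
  show ?thesis
  proof (rule that[of "sgn a"])
    show "norm (sgn a) = 1" using ab(1) by (simp add: norm_sgn)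
    show "\<forall>x\<in>S. sgn a \<bullet> x \<le> sgn a \<bullet> y - \<epsilon>/2"
    proof
      fix x assume "x \<in> S"
      then have "a \<bullet> x \<le> a \<bullet> y - (\<epsilon>/2) * norm a" using ab(2) b by force
      then have "(a \<bullet> x) / norm a \<le> (a \<bullet> y - (\<epsilon>/2) * norm a) / norm a"
        using na by (intro divide_right_mono) auto
      also have "\<dots> = (a \<bullet> y) / norm a - \<epsilon>/2"
        using na by (simp add: diff_divide_distrib)
      finally have *: "(a \<bullet> x) / norm a \<le> (a \<bullet> y) / norm a - \<epsilon>/2" .
      have sx: "sgn a \<bullet> v = (a \<bullet> v) / norm a" for v
        by (simp add: sgn_div_norm divide_inverse_commute)
      show "sgn a \<bullet> x \<le> sgn a \<bullet> y - \<epsilon>/2" unfolding sx by (rule *)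
    qed
  qed
qed


lemma dichotomy:
  fixes \<Omega> :: "(complex^'d) set"
  assumes "open \<Omega>" "convex \<Omega>" "vec_holomorphic_on \<phi> (ball 0 1)" "\<phi> ` ball 0 1 \<subseteq> closure \<Omega>"
  shows "\<phi> ` ball 0 1 \<subseteq> frontier \<Omega> \<or> \<phi> ` ball 0 1 \<subseteq> \<Omega>"
proof (cases "\<phi> ` ball 0 1 \<subseteq> \<Omega>")
  case True then show ?thesis by simp
next
  case False
  obtain z0 where z0: "z0 \<in> ball 0 1" "\<phi> z0 \<notin> \<Omega>" using \<open>\<not> \<phi> ` ball 0 1 \<subseteq> \<Omega>\<close> by blast
  define w where "w = \<phi> z0"
  have "\<Omega> \<noteq> {}" using assms(4) z0 by auto
  then obtain a b where ab: "a \<noteq> 0" "\<forall>x\<in>\<Omega>. inner a x \<le> b" "\<forall>x\<in>{w}. inner a x \<ge> b"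
    using separating_hyperplane_sets[OF assms(2) convex_singleton, of w] z0 by (auto simp: w_def)
  have strict: "a \<bullet> x < b" if x: "x \<in> \<Omega>" for x
  proof -
    obtain e where e: "e > 0" "ball x e \<subseteq> \<Omega>" using assms(1) x open_contains_ball by blast
    define t where "t = e / (2 * norm a)"
    have t: "t > 0" using e ab(1) by (simp add: t_def)
    have "norm (t *\<^sub>R a) < e" using e ab(1) by (simp add: t_def)
    then have "x + t *\<^sub>R a \<in> \<Omega>" using e(2) by (auto simp: dist_norm subset_eq)
    then have "a \<bullet> (x + t *\<^sub>R a) \<le> b" using ab(2) by blast
    moreover have "a \<bullet> (x + t *\<^sub>R a) = a \<bullet> x + t * (norm a)^2"
      by (simp add: inner_add_right power2_norm_eq_inner)
    moreover have "t * (norm a)^2 > 0" using t ab(1) by simp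
    ultimately show ?thesis by linarith
  qed
  have clos: "a \<bullet> x \<le> b" if "x \<in> closure \<Omega>" for x
  proof -
    have "closure \<Omega> \<subseteq> {x. a \<bullet> x \<le> b}"
      by (rule closure_minimal) (use ab(2) closed_halfspace_le in auto)
    then show ?thesis using that by auto
  qed
  define g where "g z = lf a (\<phi> z)" for z
  have gh: "g holomorphic_on ball 0 1" unfolding g_def by (rule lf_holo[OF assms(3)])
  have eh: "(\<lambda>z. exp (g z)) holomorphic_on ball 0 1" using gh by (intro holomorphic_intros)
  have reg: "Re (g z) = a \<bullet> \<phi> z" for z by (simp add: g_def lf_re)
  have le: "norm (exp (g z)) \<le> norm (exp (g z0))" if "z \<in> ball 0 1" for z
  proof -
    have "Re (g z) \<le> b" using clos[of "\<phi> z"] assms(4) that by (auto simp: reg image_subset_iff)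
    also have "b \<le> Re (g z0)" using ab(3) by (simp add: reg w_def)
    finally show ?thesis by simp
  qed
  have "(\<lambda>z. exp (g z)) constant_on ball 0 1"
    by (rule maximum_modulus_principle[OF eh open_ball connected_ball open_ball order_refl z0(1) le])
  then obtain c where c: "\<And>z. z \<in> ball 0 1 \<Longrightarrow> exp (g z) = c" by (auto simp: constant_on_def)
  have "\<phi> z \<in> frontier \<Omega>" if z: "z \<in> ball 0 1" for z
  proof -
    have "norm (exp (g z)) = norm (exp (g z0))" using c z z0(1) by simp
    then have "Re (g z) = Re (g z0)" by simp
    then have "a \<bullet> \<phi> z \<ge> b" using ab(3) by (simp add: reg w_def)
    then have "\<phi> z \<notin> \<Omega>" using strict by force
    then show ?thesis using assms(4) z interior_open[OF assms(1)] by (auto simp: frontier_def)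
  qed
  then show ?thesis by auto
qed


lemma uniform_limit_vec:
  fixes F :: "nat \<Rightarrow> 'a \<Rightarrow> 'b::real_normed_vector^'d"
  assumes "\<And>i. uniform_limit K (\<lambda>n z. F n z $ i) (\<lambda>z. g z $ i) sequentially"
  shows "uniform_limit K F g sequentially"
  unfolding uniform_limit_iff
proof (intro allI impI)
  fix e :: real assume e: "e > 0"
  define e' where "e' = e / real CARD('d)"
  have e': "e' > 0" using e by (simp add: e'_def)
  have "\<forall>\<^sub>F n in sequentially. \<forall>i. \<forall>x\<in>K. dist (F n x $ i) (g x $ i) < e'"
  proof (rule eventually_all_finite)
    fix i show "\<forall>\<^sub>F n in sequentially. \<forall>x\<in>K. dist (F n x $ i) (g x $ i) < e'"
      using uniform_limitD[OF assms[of i] e'] by simp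
  qed
  then show "\<forall>\<^sub>F n in sequentially. \<forall>x\<in>K. dist (F n x) (g x) < e"
  proof (rule eventually_mono, intro ballI)
    fix n x assume h: "\<forall>i. \<forall>x\<in>K. dist (F n x $ i) (g x $ i) < e'" and x: "x \<in> K"
    have "dist (F n x) (g x) \<le> (\<Sum>i\<in>UNIV. norm ((F n x - g x) $ i))"
      unfolding dist_norm by (simp add: norm_vec_def L2_set_le_sum)
    also have "\<dots> < (\<Sum>i\<in>(UNIV::'d set). e')"
      by (rule sum_strict_mono) (use h x in \<open>auto simp: dist_norm\<close>)
    also have "\<dots> = e" by (simp add: e'_def)
    finally show "dist (F n x) (g x) < e" .
  qed
qed


lemma vec_montel:
  fixes F :: "nat \<Rightarrow> complex \<Rightarrow> complex^'d"
  assumes S: "open S" and hol: "\<And>n. vec_holomorphic_on (F n) S"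
    and bd: "\<And>K. compact K \<Longrightarrow> K \<subseteq> S \<Longrightarrow> \<exists>B. \<forall>n. \<forall>z\<in>K. norm (F n z) \<le> B"
  obtains g r where "vec_holomorphic_on g S" "strict_mono r"
    "\<And>K. compact K \<Longrightarrow> K \<subseteq> S \<Longrightarrow> uniform_limit K (F \<circ> r) g sequentially"
proof -
  have claim: "\<exists>r G. strict_mono r \<and> (\<forall>i\<in>I. G i holomorphic_on S \<and>
      (\<forall>K. compact K \<and> K \<subseteq> S \<longrightarrow> uniform_limit K (\<lambda>n z. F (r n) z $ i) (G i) sequentially))"
    if "finite I" for I :: "'d set"
    using that
  proof (induction I rule: finite_induct)
    case empty show ?case by (rule exI[of _ id]) (auto simp: strict_mono_def)
  next
    case (insert i I)
    then obtain r G where r: "strict_mono r" and G: "\<forall>j\<in>I. G j holomorphic_on S \<and>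
      (\<forall>K. compact K \<and> K \<subseteq> S \<longrightarrow> uniform_limit K (\<lambda>n z. F (r n) z $ j) (G j) sequentially)" by blast
    have H: "\<And>h. h \<in> range (\<lambda>n z. F (r n) z $ i) \<Longrightarrow> h holomorphic_on S"
      using hol by (auto simp: vec_holomorphic_on_def)
    have B: "\<exists>B. \<forall>h\<in>range (\<lambda>n z. F (r n) z $ i). \<forall>z\<in>K. norm (h z) \<le> B" if KK: "compact K" "K \<subseteq> S" for K
    proof -
      obtain B where B: "\<forall>n. \<forall>z\<in>K. norm (F n z) \<le> B" using bd[OF KK] by blast
      show ?thesis
        by (rule exI[of _ B]) (use B Finite_Cartesian_Product.norm_nth_le order_trans in blast)
    qed
    obtain g r' where g: "g holomorphic_on S" "strict_mono r'"
      "\<And>x. x \<in> S \<Longrightarrow> ((\<lambda>n. (\<lambda>n z. F (r n) z $ i) (r' n) x) \<longlongrightarrow> g x) sequentially"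
      "\<And>K. compact K \<Longrightarrow> K \<subseteq> S \<Longrightarrow> uniform_limit K ((\<lambda>n z. F (r n) z $ i) \<circ> r') g sequentially"
      using Montel[OF S H B order_refl] by blast
    show ?case
    proof (intro exI conjI ballI allI impI)
      show "strict_mono (r \<circ> r')" using r g(2) by (rule strict_mono_o)
      fix j assume j: "j \<in> insert i I"
      show "(G(i := g)) j holomorphic_on S" using j G g(1) by auto
      fix K assume K: "compact K \<and> K \<subseteq> S"
      show "uniform_limit K (\<lambda>n z. F ((r \<circ> r') n) z $ j) ((G(i := g)) j) sequentially"
      proof (cases "j = i")
        case True
        then show ?thesis using g(4)[of K] K by (simp add: o_def)
      next
        case False
        then have "j \<in> I" using j by auto
        then have "uniform_limit K (\<lambda>n z. F (r n) z $ j) (G j) sequentially" using G K by blast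
        from filterlim_compose[OF this filterlim_subseq[OF g(2)]]
        show ?thesis using False by (simp add: o_def)
      qed
    qed
  qed
  obtain r G where r: "strict_mono r" and G: "\<forall>i. G i holomorphic_on S \<and>
      (\<forall>K. compact K \<and> K \<subseteq> S \<longrightarrow> uniform_limit K (\<lambda>n z. F (r n) z $ i) (G i) sequentially)"
    using claim[of UNIV] by auto
  define g where "g z = (\<chi> i. G i z)" for z
  show thesis
  proof (rule that[of g r])
    show "vec_holomorphic_on g S" using G by (simp add: vec_holomorphic_on_def g_def)
    show "strict_mono r" by (rule r)
    fix K assume K: "compact K" "K \<subseteq> S"
    show "uniform_limit K (F \<circ> r) g sequentially"
      by (rule uniform_limit_vec) (use G K in \<open>simp add: g_def o_def\<close>)
  qed
qed

lemma norm_scaleR_sgn: "norm x *\<^sub>R sgn x = (x::'a::real_normed_vector)"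
  by (cases "x = 0") (simp_all add: sgn_div_norm)

lemma core:
  fixes \<Omega>s :: "nat \<Rightarrow> (complex ^ 'd) set" and \<Omega> :: "(complex ^ 'd) set"
    and \<phi>s :: "nat \<Rightarrow> complex \<Rightarrow> complex ^ 'd"
  assumes \<Omega>o: "open \<Omega>" "convex \<Omega>" "C_proper \<Omega>"
    and \<Omega>sc: "\<And>n. convex (\<Omega>s n)"
    and lhc: "local_hausdorff_conv \<Omega>s \<Omega>"
    and hol: "\<And>n. vec_holomorphic_on (\<phi>s n) (ball 0 1)"
    and img: "\<And>n. \<phi>s n ` ball 0 1 \<subseteq> \<Omega>s n"
    and m: "filterlim m at_top sequentially"
    and x0: "x0 \<in> ball 0 1" and K: "compact K" "K \<subseteq> ball 0 1" and zk: "\<And>k. z k \<in> K"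
    and pl: "(\<lambda>k. \<phi>s (m k) x0) \<longlonglongrightarrow> p"
    and ul: "(\<lambda>k. sgn (\<phi>s (m k) (z k))) \<longlonglongrightarrow> u"
    and inf: "filterlim (\<lambda>k. norm (\<phi>s (m k) (z k))) at_top sequentially"
  shows False
proof -
  have imgx: "\<phi>s n w \<in> \<Omega>s n" if "w \<in> ball 0 1" for n w using img that by blast
  have pcl: "p \<in> closure \<Omega>"
  proof (rule lhc_limit_in_closure[OF lhc m _ pl])
    show "\<forall>\<^sub>F k in sequentially. \<phi>s (m k) x0 \<in> closure (\<Omega>s (m k))"
      using imgx[OF x0] closure_subset by (intro always_eventually) blast
  qed
  have evpos: "\<forall>\<^sub>F k in sequentially. norm (\<phi>s (m k) (z k)) \<ge> 1"
    using inf by (simp add: filterlim_at_top)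
  have "((\<lambda>k. norm (sgn (\<phi>s (m k) (z k)))) \<longlongrightarrow> norm u) sequentially"
    by (rule tendsto_norm[OF ul])
  moreover have "((\<lambda>k. norm (sgn (\<phi>s (m k) (z k)))) \<longlongrightarrow> 1) sequentially"
  proof (rule Lim_transform_eventually[OF tendsto_const])
    show "\<forall>\<^sub>F k in sequentially. 1 = norm (sgn (\<phi>s (m k) (z k)))"
      using evpos by eventually_elim (auto simp: norm_sgn)
  qed
  ultimately have nu: "norm u = 1" using LIMSEQ_unique by blast
  then have u0: "u \<noteq> 0" by auto
  obtain \<zeta> where y: "p + \<zeta> *s u \<notin> closure \<Omega>" using line_in_closure[OF \<Omega>o pcl u0] by blast
  define y where "y = p + \<zeta> *s u"
  obtain \<epsilon> where \<epsilon>: "\<epsilon> > 0" "\<forall>\<^sub>F n in sequentially. \<forall>x\<in>closure (\<Omega>s n). dist x y \<ge> \<epsilon>"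
    using lhc_away[OF lhc y[folded y_def]] by blast
  define P where "P k a \<longleftrightarrow> (\<forall>x\<in>\<Omega>s (m k). a \<bullet> x \<le> a \<bullet> y - \<epsilon>/2)" for k a
  have ev: "\<forall>\<^sub>F k in sequentially. \<exists>a. norm a = 1 \<and> P k a"
    using eventually_compose_filterlim[OF \<epsilon>(2) m]
  proof eventually_elim
    case (elim k)
    then have "\<forall>x\<in>\<Omega>s (m k). dist x y \<ge> \<epsilon>" using closure_subset by blast
    then obtain a where "norm a = 1" "\<forall>x\<in>\<Omega>s (m k). a \<bullet> x \<le> a \<bullet> y - \<epsilon>/2"
      using sep_ball[OF \<Omega>sc \<epsilon>(1)] by blast
    then show ?case unfolding P_def by blast
  qed
  have one: "norm (sgn (1::complex^'d)) = 1"
  proof -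
    have "(1::complex^'d) \<noteq> 0" by (simp add: vec_eq_iff)
    then show ?thesis by (simp add: norm_sgn)
  qed
  define A where "A k = (SOME a. norm a = 1 \<and> ((\<exists>a'. norm a' = 1 \<and> P k a') \<longrightarrow> P k a))" for k
  have A1: "norm (A k) = 1 \<and> ((\<exists>a'. norm a' = 1 \<and> P k a') \<longrightarrow> P k (A k))" for k
    unfolding A_def
  proof (rule someI_ex)
    show "\<exists>a. norm a = 1 \<and> ((\<exists>a'. norm a' = 1 \<and> P k a') \<longrightarrow> P k a)"
      using one by blast
  qed
  have nA: "norm (A k) = 1" for k using A1 by blast
  have evA: "\<forall>\<^sub>F k in sequentially. P k (A k)" using ev by eventually_elim (use A1 in blast)
  have "bounded (range A)" unfolding bounded_iff using nA by auto
  then obtain a s where s: "strict_mono s" and As: "(A \<circ> s) \<longlonglongrightarrow> a"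
    using bounded_imp_convergent_subsequence by blast
  have fs: "filterlim s sequentially sequentially" by (rule filterlim_subseq[OF s])
  have pls: "(\<lambda>k. \<phi>s (m (s k)) x0) \<longlonglongrightarrow> p"
    using LIMSEQ_subseq_LIMSEQ[OF pl s] by (simp add: o_def)
  have uls: "(\<lambda>k. sgn (\<phi>s (m (s k)) (z (s k)))) \<longlonglongrightarrow> u"
    using LIMSEQ_subseq_LIMSEQ[OF ul s] by (simp add: o_def)
  have infs: "filterlim (\<lambda>k. norm (\<phi>s (m (s k)) (z (s k)))) at_top sequentially"
    using filterlim_compose[OF inf fs] .
  have evAs: "\<forall>\<^sub>F k in sequentially. P (s k) (A (s k))"
    using eventually_compose_filterlim[OF evA fs] .
  have As': "(\<lambda>k. A (s k)) \<longlonglongrightarrow> a" using As by (simp add: o_def)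
  have "a \<bullet> p \<le> a \<bullet> y - \<epsilon>/2"
  proof (rule tendsto_le[OF trivial_limit_sequentially])
    show "((\<lambda>k. A (s k) \<bullet> y - \<epsilon>/2) \<longlongrightarrow> a \<bullet> y - \<epsilon>/2) sequentially"
      by (intro tendsto_intros As')
    show "((\<lambda>k. A (s k) \<bullet> \<phi>s (m (s k)) x0) \<longlongrightarrow> a \<bullet> p) sequentially"
      by (intro tendsto_intros As' pls)
    show "\<forall>\<^sub>F k in sequentially. A (s k) \<bullet> \<phi>s (m (s k)) x0 \<le> A (s k) \<bullet> y - \<epsilon>/2"
      using evAs by eventually_elim (use imgx[OF x0] in \<open>auto simp: P_def\<close>)
  qed
  then have "Re (lf a (\<zeta> *s u)) \<ge> \<epsilon>/2"
    by (simp add: lf_re y_def inner_add_right)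
  then have "Re (\<zeta> * lf a u) > 0" using \<epsilon>(1) by (simp add: lf_scale)
  then have lau: "lf a u \<noteq> 0" by auto
  define \<eta> where "\<eta> = cmod (lf a u) / 2"
  have \<eta>: "\<eta> > 0" using lau by (simp add: \<eta>_def)
  have x0n: "norm x0 < 1" using x0 by simp
  obtain Cb where Cb: "Cb \<ge> 0" "\<And>f c z. f holomorphic_on ball 0 1 \<Longrightarrow> (\<And>w. w \<in> ball 0 1 \<Longrightarrow> Re (f w) < c)
     \<Longrightarrow> z \<in> K \<Longrightarrow> cmod (f z - f x0) \<le> Cb * (c - Re (f x0))"
    using halfplane_bound[OF x0n K] by blast
  have "Bseq (\<lambda>k. \<phi>s (m (s k)) x0)" using pls by (intro convergent_imp_Bseq convergentI)
  then obtain Pb where Pb: "Pb > 0" "\<And>k. norm (\<phi>s (m (s k)) x0) \<le> Pb" by (auto simp: Bseq_def)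
  define Bd where "Bd = CARD('d) * Pb + Cb * (norm y + CARD('d) * Pb)"
  have bound: "\<forall>\<^sub>F k in sequentially. cmod (lf (A (s k)) (\<phi>s (m (s k)) (z (s k)))) \<le> Bd"
    using evAs
  proof eventually_elim
    case (elim k)
    define f where "f w = lf (A (s k)) (\<phi>s (m (s k)) w)" for w
    define c where "c = A (s k) \<bullet> y"
    have fh: "f holomorphic_on ball 0 1" unfolding f_def by (rule lf_holo[OF hol])
    have fc: "Re (f w) < c" if "w \<in> ball 0 1" for w
    proof -
      have "Re (f w) \<le> c - \<epsilon>/2" using elim imgx[OF that] by (auto simp: P_def f_def c_def lf_re)
      then show ?thesis using \<epsilon>(1) by linarith
    qed
    have main: "cmod (f (z (s k)) - f x0) \<le> Cb * (c - Re (f x0))"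
      by (rule Cb(2)[OF fh fc zk])
    have f0: "cmod (f x0) \<le> CARD('d) * Pb"
    proof -
      have "cmod (f x0) \<le> CARD('d) * (norm (A (s k)) * norm (\<phi>s (m (s k)) x0))"
        unfolding f_def by (rule lf_bound)
      also have "\<dots> \<le> CARD('d) * Pb" using nA Pb(2)[of k] by simp
      finally show ?thesis .
    qed
    have cb: "c \<le> norm y"
      using Cauchy_Schwarz_ineq2[of "A (s k)" y] nA[of "s k"] by (simp add: c_def)
    have "- Re (f x0) \<le> cmod (f x0)" using abs_Re_le_cmod[of "f x0"] by linarith
    then have "c - Re (f x0) \<le> norm y + CARD('d) * Pb" using cb f0 by linarith
    then have "Cb * (c - Re (f x0)) \<le> Cb * (norm y + CARD('d) * Pb)" using Cb(1) by (rule mult_left_mono)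
    then have "cmod (f (z (s k)) - f x0) \<le> Cb * (norm y + CARD('d) * Pb)" using main by linarith
    moreover have "cmod (f (z (s k))) \<le> cmod (f (z (s k)) - f x0) + cmod (f x0)"
      using norm_triangle_ineq[of "f (z (s k)) - f x0" "f x0"] by simp
    ultimately show ?case using f0 by (simp add: f_def Bd_def)
  qed
  have "((\<lambda>k. lf (A (s k)) (sgn (\<phi>s (m (s k)) (z (s k))))) \<longlongrightarrow> lf a u) sequentially"
    by (rule lf_tendsto[OF As' uls])
  then have "((\<lambda>k. cmod (lf (A (s k)) (sgn (\<phi>s (m (s k)) (z (s k)))))) \<longlongrightarrow> cmod (lf a u)) sequentially"
    by (rule tendsto_norm)
  then have ev3: "\<forall>\<^sub>F k in sequentially. cmod (lf (A (s k)) (sgn (\<phi>s (m (s k)) (z (s k))))) > \<eta>"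
    using \<eta> by (intro order_tendstoD(1)) (auto simp: \<eta>_def)
  have ev4: "\<forall>\<^sub>F k in sequentially. norm (\<phi>s (m (s k)) (z (s k))) \<ge> Bd / \<eta> + 1"
    using infs by (simp add: filterlim_at_top)
  have "\<forall>\<^sub>F k in sequentially. False"
    using bound ev3 ev4
  proof eventually_elim
    case (elim k)
    define q where "q = \<phi>s (m (s k)) (z (s k))"
    define L where "L = cmod (lf (A (s k)) (sgn q))"
    have Bd0: "Bd \<ge> 0" using bound elim(1) by (meson norm_ge_zero order_trans)
    have lq: "cmod (lf (A (s k)) q) = norm q * L"
    proof -
      have "lf (A (s k)) q = lf (A (s k)) (norm q *\<^sub>R sgn q)" by (simp add: norm_scaleR_sgn)
      also have "\<dots> = of_real (norm q) * lf (A (s k)) (sgn q)" by (rule lf_scaleR)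
      finally show ?thesis by (simp add: L_def norm_mult)
    qed
    have L: "L > \<eta>" using elim(2) by (simp add: L_def q_def)
    have nq: "norm q \<ge> Bd / \<eta> + 1" using elim(3) by (simp add: q_def)
    have "norm q * L \<ge> (Bd / \<eta> + 1) * \<eta>"
      by (rule mult_mono) (use nq L \<eta> Bd0 in auto)
    also have "(Bd / \<eta> + 1) * \<eta> = Bd + \<eta>" using \<eta> by (simp add: field_simps)
    finally have "cmod (lf (A (s k)) q) \<ge> Bd + \<eta>" using lq by simp
    then show False using elim(1) \<eta> by (simp add: q_def)
  qed
  then show False by simp
qed


lemma locbdd:
  fixes \<Omega>s :: "nat \<Rightarrow> (complex ^ 'd) set" and \<Omega> :: "(complex ^ 'd) set"
    and \<phi>s :: "nat \<Rightarrow> complex \<Rightarrow> complex ^ 'd" and r0 :: "nat \<Rightarrow> nat"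
  assumes \<Omega>o: "open \<Omega>" "convex \<Omega>" "C_proper \<Omega>"
    and \<Omega>sc: "\<And>n. convex (\<Omega>s n)"
    and lhc: "local_hausdorff_conv \<Omega>s \<Omega>"
    and hol: "\<And>n. vec_holomorphic_on (\<phi>s n) (ball 0 1)"
    and img: "\<And>n. \<phi>s n ` ball 0 1 \<subseteq> \<Omega>s n"
    and r0: "strict_mono r0"
    and x0: "x0 \<in> ball 0 1" and B0: "\<And>n. norm (\<phi>s (r0 n) x0) \<le> B0"
    and K: "compact K" "K \<subseteq> ball 0 1"
  shows "\<exists>B. \<forall>n. \<forall>z\<in>K. norm (\<phi>s (r0 n) z) \<le> B"
proof (rule ccontr)
  assume nb: "\<not> ?thesis"
  have one: "\<exists>M. \<forall>z\<in>K. norm (\<phi>s (r0 n) z) \<le> M" for n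
  proof -
    have "continuous_on K (\<phi>s (r0 n))"
      using vec_holo_cont[OF hol] K(2) continuous_on_subset by blast
    then have "bounded (\<phi>s (r0 n) ` K)" by (intro compact_imp_bounded compact_continuous_image K(1))
    then show ?thesis by (auto simp: bounded_iff)
  qed
  have fin: "\<exists>M. \<forall>n<N. \<forall>z\<in>K. norm (\<phi>s (r0 n) z) \<le> M" for N :: nat
  proof (induction N)
    case 0 then show ?case by auto
  next
    case (Suc N)
    then obtain M where M: "\<forall>n<N. \<forall>z\<in>K. norm (\<phi>s (r0 n) z) \<le> M" by blast
    obtain M' where M': "\<forall>z\<in>K. norm (\<phi>s (r0 N) z) \<le> M'" using one by blast
    show ?case
    proof (rule exI[of _ "max M M'"], intro allI impI ballI)
      fix n z assume "n < Suc N" "z \<in> K"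
      then show "norm (\<phi>s (r0 n) z) \<le> max M M'" using M M'
        by (cases "n = N") (auto simp: le_max_iff_disj)
    qed
  qed
  have "\<forall>k::nat. \<exists>n z. z \<in> K \<and> norm (\<phi>s (r0 n) z) > real k"
    using nb by (meson not_le)
  then obtain nk zk where nz: "\<And>k. zk k \<in> K" "\<And>k. norm (\<phi>s (r0 (nk k)) (zk k)) > real k"
    by metis
  have fnk: "filterlim nk at_top sequentially"
    unfolding filterlim_at_top
  proof
    fix N
    obtain M where M: "\<forall>n<N. \<forall>z\<in>K. norm (\<phi>s (r0 n) z) \<le> M" using fin by blast
    show "\<forall>\<^sub>F k in sequentially. N \<le> nk k"
      unfolding eventually_sequentially
    proof (intro exI[of _ "nat \<lceil>M\<rceil>"] allI impI)
      fix k assume k: "nat \<lceil>M\<rceil> \<le> k"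
      show "N \<le> nk k"
      proof (rule ccontr)
        assume "\<not> N \<le> nk k"
        then have "norm (\<phi>s (r0 (nk k)) (zk k)) \<le> M" using M nz(1) by auto
        moreover have "M \<le> real k" using k by linarith
        ultimately show False using nz(2)[of k] by linarith
      qed
    qed
  qed
  have "bounded (range (\<lambda>k. \<phi>s (r0 (nk k)) x0))" unfolding bounded_iff using B0 by auto
  then obtain p s1 where s1: "strict_mono s1" and p: "((\<lambda>k. \<phi>s (r0 (nk k)) x0) \<circ> s1) \<longlonglongrightarrow> p"
    using bounded_imp_convergent_subsequence by blast
  have "bounded (range (\<lambda>k. sgn (\<phi>s (r0 (nk (s1 k))) (zk (s1 k)))))"
    unfolding bounded_iff by (intro exI[of _ 1]) (auto simp: norm_sgn)
  then obtain u s2 where s2: "strict_mono s2" and u: "((\<lambda>k. sgn (\<phi>s (r0 (nk (s1 k))) (zk (s1 k)))) \<circ> s2) \<longlonglongrightarrow> u"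
    using bounded_imp_convergent_subsequence by blast
  define m where "m k = r0 (nk (s1 (s2 k)))" for k
  define z where "z k = zk (s1 (s2 k))" for k
  have s12: "filterlim (\<lambda>k. s1 (s2 k)) sequentially sequentially"
    using filterlim_subseq[OF strict_mono_o[OF s1 s2]] by (simp add: o_def)
  have m: "filterlim m at_top sequentially"
  proof -
    have "filterlim (\<lambda>k. nk (s1 (s2 k))) at_top sequentially" by (rule filterlim_compose[OF fnk s12])
    then show ?thesis unfolding m_def by (rule filterlim_compose[OF filterlim_subseq[OF r0]])
  qed
  show False
  proof (rule core[OF \<Omega>o \<Omega>sc lhc hol img m x0 K])
    show "z k \<in> K" for k using nz(1) by (simp add: z_def)
    show "(\<lambda>k. \<phi>s (m k) x0) \<longlonglongrightarrow> p"
      using LIMSEQ_subseq_LIMSEQ[OF p s2] by (simp add: o_def m_def)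
    show "(\<lambda>k. sgn (\<phi>s (m k) (z k))) \<longlonglongrightarrow> u"
      using u by (simp add: o_def m_def z_def)
    have "filterlim (\<lambda>k. real k) at_top sequentially" by (rule filterlim_real_sequentially)
    then have "filterlim (\<lambda>k. real (s1 (s2 k))) at_top sequentially"
      using filterlim_compose[OF _ s12] by blast
    then show "filterlim (\<lambda>k. norm (\<phi>s (m k) (z k))) at_top sequentially"
      by (rule filterlim_at_top_mono) (rule always_eventually, use nz(2) less_imp_le in \<open>auto simp: m_def z_def\<close>)
  qed
qed


theorem proposition4p2:
  fixes \<Omega>s :: "nat \<Rightarrow> (complex ^ 'd) set"
    and \<Omega> :: "(complex ^ 'd) set"
    and \<phi>s :: "nat \<Rightarrow> complex \<Rightarrow> complex ^ 'd"
  assumes "\<And>n. open (\<Omega>s n)" and "\<And>n. convex (\<Omega>s n)" and "\<And>n. C_proper (\<Omega>s n)"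
    and "open \<Omega>" and "convex \<Omega>" and "C_proper \<Omega>"
    and "local_hausdorff_conv \<Omega>s \<Omega>"
    and "\<And>n. vec_holomorphic_on (\<phi>s n) (ball 0 1)"
    and "\<And>n. \<phi>s n ` ball 0 1 \<subseteq> \<Omega>s n"
  shows "(\<forall>x\<in>ball 0 1. filterlim (\<lambda>n. norm (\<phi>s n x)) at_top sequentially)
     \<or> (\<exists>r \<phi>. strict_mono r \<and> vec_holomorphic_on \<phi> (ball 0 1)
            \<and> \<phi> ` ball 0 1 \<subseteq> closure \<Omega>
            \<and> (\<forall>K. compact K \<and> K \<subseteq> ball 0 1 \<longrightarrow>
                   uniform_limit K (\<lambda>n. \<phi>s (r n)) \<phi> sequentially)
            \<and> (\<phi> ` ball 0 1 \<subseteq> frontier \<Omega> \<or> \<phi> ` ball 0 1 \<subseteq> \<Omega>))"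
proof (cases "\<forall>x\<in>ball 0 1. filterlim (\<lambda>n. norm (\<phi>s n x)) at_top sequentially")
  case True then show ?thesis by blast
next
  case False
  note \<Omega>o = assms(4,5,6) and \<Omega>sc = assms(2) and lhc = assms(7) and hol = assms(8) and img = assms(9)
  obtain x0 where x0: "x0 \<in> ball 0 1" "\<not> filterlim (\<lambda>n. norm (\<phi>s n x0)) at_top sequentially"
    using False by blast
  then obtain Z where Z: "\<not> (\<forall>\<^sub>F n in sequentially. Z \<le> norm (\<phi>s n x0))"
    unfolding filterlim_at_top by blast
  then have "infinite {n. \<not> Z \<le> norm (\<phi>s n x0)}"
    by (simp add: cofinite_eq_sequentially[symmetric] eventually_cofinite)
  then obtain r0 :: "nat \<Rightarrow> nat" where r0: "strict_mono r0" "\<And>n. r0 n \<in> {n. \<not> Z \<le> norm (\<phi>s n x0)}"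
    using infinite_enumerate by blast
  have B0: "norm (\<phi>s (r0 n) x0) \<le> Z" for n using r0(2)[of n] by simp
  obtain g r where g: "vec_holomorphic_on g (ball 0 1)" "strict_mono r"
    "\<And>K. compact K \<Longrightarrow> K \<subseteq> ball 0 1 \<Longrightarrow> uniform_limit K ((\<lambda>n. \<phi>s (r0 n)) \<circ> r) g sequentially"
  proof (rule vec_montel[of "ball 0 1" "\<lambda>n. \<phi>s (r0 n)"])
    show "\<And>K. compact K \<Longrightarrow> K \<subseteq> ball 0 1 \<Longrightarrow> \<exists>B. \<forall>n. \<forall>z\<in>K. norm (\<phi>s (r0 n) z) \<le> B"
      by (rule locbdd[OF \<Omega>o \<Omega>sc lhc hol img r0(1) x0(1) B0])
  qed (use hol in auto)
  define R where "R = r0 \<circ> r"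
  have R: "strict_mono R" unfolding R_def by (rule strict_mono_o[OF r0(1) g(2)])
  have ul: "uniform_limit K (\<lambda>n. \<phi>s (R n)) g sequentially" if "compact K" "K \<subseteq> ball 0 1" for K
    using g(3)[OF that] by (simp add: R_def o_def)
  have cl: "g ` ball 0 1 \<subseteq> closure \<Omega>"
  proof
    fix w assume "w \<in> g ` ball 0 1"
    then obtain z where z: "z \<in> ball 0 1" "w = g z" by blast
    have "uniform_limit {z} (\<lambda>n. \<phi>s (R n)) g sequentially" by (rule ul) (use z in auto)
    then have lim: "(\<lambda>n. \<phi>s (R n) z) \<longlonglongrightarrow> g z" by (rule tendsto_uniform_limitI) simp
    have "g z \<in> closure \<Omega>"
    proof (rule lhc_limit_in_closure[OF lhc filterlim_subseq[OF R] _ lim])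
      show "\<forall>\<^sub>F k in sequentially. \<phi>s (R k) z \<in> closure (\<Omega>s (R k))"
        using img z(1) closure_subset by (intro always_eventually) blast
    qed
    then show "w \<in> closure \<Omega>" using z by simp
  qed
  have "\<exists>r \<phi>. strict_mono r \<and> vec_holomorphic_on \<phi> (ball 0 1)
            \<and> \<phi> ` ball 0 1 \<subseteq> closure \<Omega>
            \<and> (\<forall>K. compact K \<and> K \<subseteq> ball 0 1 \<longrightarrow>
                   uniform_limit K (\<lambda>n. \<phi>s (r n)) \<phi> sequentially)
            \<and> (\<phi> ` ball 0 1 \<subseteq> frontier \<Omega> \<or> \<phi> ` ball 0 1 \<subseteq> \<Omega>)"
    using R g(1) cl ul dichotomy[OF assms(4,5) g(1) cl] by blast
  then show ?thesis by blast
qed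

end
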